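(* Let $(u_n)_{n\ge0}$ be the Tetranacci numbers, defined by $u_0=0$, $u_1=1$, $u_2=1$, $u_3=2$ and $u_{n+4}=u_{n+3}+u_{n+2}+u_{n+1}+u_n$ for $n\ge0$. For integers $n$ define $t_n=\tfrac12 u_nu_{n+2}$ if $n\ge0$ and $t_n=0$ if $n<0$. Then for every $n\ge1$, \[ \sum_{0\le k\le n}u_k^2=\frac13+\frac13\bigl(2t_{n}+t_{n-1}-t_{n-2}-t_{n-3}+5t_{n-4}+4t_{n-5}+t_{n-6}+t_{n-7}-t_{n-8}-t_{n-9}\bigr). \] *)

theory Defs
  imports Complex_Main
begin

fun tetra :: "nat \<Rightarrow> int" where
  "tetra 0 = 0"
| "tetra (Suc 0) = 1"
| "tetra (Suc (Suc 0)) = 1"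
| "tetra (Suc (Suc (Suc 0))) = 2"
| "tetra (Suc (Suc (Suc (Suc n)))) =
     tetra (Suc (Suc (Suc n))) + tetra (Suc (Suc n)) + tetra (Suc n) + tetra n"

definition tt :: "int \<Rightarrow> real" where
  "tt n = (if n \<ge> 0 then (1/2) * real_of_int (tetra (nat n) * tetra (nat n + 2)) else 0)"

end

theory Submission
  imports Defs
begin

lemma tetra_rec: "tetra (n+4) = tetra (n+3) + tetra (n+2) + tetra (n+1) + tetra n"
  by (simp add: numeral_eq_Suc)

definition TT :: "nat \<Rightarrow> int" where "TT j = tetra j * tetra (j+2)"

definition Q :: "nat \<Rightarrow> int" where
  "Q m = 2 * TT (m+9) + TT (m+8) - TT (m+7) - TT (m+6) + 5 * TT (m+5) + 4 * TT (m+4)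
     + TT (m+3) + TT (m+2) - TT (m+1) - TT m"

lemma Q_step: "Q (Suc m) = Q m + 6 * (tetra (m+10))^2"
proof -
  define a where "a = tetra m"
  define b where "b = tetra (m+1)"
  define c where "c = tetra (m+2)"
  define d where "d = tetra (m+3)"
  have h4: "tetra (m+4) = a+b+c+d" using tetra_rec[of m] by (simp only: a_def b_def c_def d_def)
  have h5: "tetra (m+5) = tetra (m+4) + d + c + b"
  proof -
    have "tetra (m+1+4) = tetra (m+1+3) + tetra (m+1+2) + tetra (m+1+1) + tetra (m+1)" by (rule tetra_rec)
    moreover have "m+1+4 = m+5" "m+1+3 = m+4" "m+1+2 = m+3" "m+1+1 = m+2" by simp_all
    ultimately show ?thesis by (simp only: a_def b_def c_def d_def)
  qed
  have h6: "tetra (m+6) = tetra (m+5) + tetra (m+4) + d + c"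
  proof -
    have "tetra (m+2+4) = tetra (m+2+3) + tetra (m+2+2) + tetra (m+2+1) + tetra (m+2)" by (rule tetra_rec)
    moreover have "m+2+4 = m+6" "m+2+3 = m+5" "m+2+2 = m+4" "m+2+1 = m+3" by simp_all
    ultimately show ?thesis by (simp only: a_def b_def c_def d_def)
  qed
  have h7: "tetra (m+7) = tetra (m+6) + tetra (m+5) + tetra (m+4) + d"
  proof -
    have "tetra (m+3+4) = tetra (m+3+3) + tetra (m+3+2) + tetra (m+3+1) + tetra (m+3)" by (rule tetra_rec)
    moreover have "m+3+4 = m+7" "m+3+3 = m+6" "m+3+2 = m+5" "m+3+1 = m+4" by simp_all
    ultimately show ?thesis by (simp only: a_def b_def c_def d_def)
  qed
  have h8: "tetra (m+8) = tetra (m+7) + tetra (m+6) + tetra (m+5) + tetra (m+4)"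
  proof -
    have "tetra (m+4+4) = tetra (m+4+3) + tetra (m+4+2) + tetra (m+4+1) + tetra (m+4)" by (rule tetra_rec)
    moreover have "m+4+4 = m+8" "m+4+3 = m+7" "m+4+2 = m+6" "m+4+1 = m+5" by simp_all
    ultimately show ?thesis by (simp only: a_def b_def c_def d_def)
  qed
  have h9: "tetra (m+9) = tetra (m+8) + tetra (m+7) + tetra (m+6) + tetra (m+5)"
  proof -
    have "tetra (m+5+4) = tetra (m+5+3) + tetra (m+5+2) + tetra (m+5+1) + tetra (m+5)" by (rule tetra_rec)
    moreover have "m+5+4 = m+9" "m+5+3 = m+8" "m+5+2 = m+7" "m+5+1 = m+6" by simp_all
    ultimately show ?thesis by (simp only: a_def b_def c_def d_def)
  qed
  have h10: "tetra (m+10) = tetra (m+9) + tetra (m+8) + tetra (m+7) + tetra (m+6)"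
  proof -
    have "tetra (m+6+4) = tetra (m+6+3) + tetra (m+6+2) + tetra (m+6+1) + tetra (m+6)" by (rule tetra_rec)
    moreover have "m+6+4 = m+10" "m+6+3 = m+9" "m+6+2 = m+8" "m+6+1 = m+7" by simp_all
    ultimately show ?thesis by (simp only: a_def b_def c_def d_def)
  qed
  have h11: "tetra (m+11) = tetra (m+10) + tetra (m+9) + tetra (m+8) + tetra (m+7)"
  proof -
    have "tetra (m+7+4) = tetra (m+7+3) + tetra (m+7+2) + tetra (m+7+1) + tetra (m+7)" by (rule tetra_rec)
    moreover have "m+7+4 = m+11" "m+7+3 = m+10" "m+7+2 = m+9" "m+7+1 = m+8" by simp_all
    ultimately show ?thesis by (simp only: a_def b_def c_def d_def)
  qed
  have h12: "tetra (m+12) = tetra (m+11) + tetra (m+10) + tetra (m+9) + tetra (m+8)"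
  proof -
    have "tetra (m+8+4) = tetra (m+8+3) + tetra (m+8+2) + tetra (m+8+1) + tetra (m+8)" by (rule tetra_rec)
    moreover have "m+8+4 = m+12" "m+8+3 = m+11" "m+8+2 = m+10" "m+8+1 = m+9" by simp_all
    ultimately show ?thesis by (simp only: a_def b_def c_def d_def)
  qed
  have e: "m + 1 + 1 = m + 2" "m + 1 + 2 = m + 3" "m + 1 + 3 = m + 4" "m + 1 + 4 = m + 5" "m + 1 + 5 = m + 6" "m + 1 + 6 = m + 7" "m + 1 + 7 = m + 8" "m + 1 + 8 = m + 9" "m + 1 + 9 = m + 10" "m + 1 + 2 = m + 3" "m + 2 + 2 = m + 4" "m + 3 + 2 = m + 5" "m + 4 + 2 = m + 6" "m + 5 + 2 = m + 7" "m + 6 + 2 = m + 8" "m + 7 + 2 = m + 9" "m + 8 + 2 = m + 10" "m + 9 + 2 = m + 11" "m + 10 + 2 = m + 12" by simp_all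
  have "Q (m+1) = Q m + 6 * (tetra (m+10))^2"
    unfolding Q_def
    apply (simp only: e)
    unfolding TT_def
    apply (simp only: e)
    unfolding h12 unfolding h11 unfolding h10 unfolding h9 unfolding h8 unfolding h7 unfolding h6 unfolding h5 unfolding h4
    unfolding a_def[symmetric] b_def[symmetric] c_def[symmetric] d_def[symmetric]
    by (simp add: algebra_simps power2_eq_square)
  then show ?thesis by simp
qed


lemma sum_Q: "6 * (\<Sum>k\<le>m+9. (tetra k)^2) = 2 + Q m"
proof (induction m)
  case 0
  show ?case by (simp add: Q_def TT_def numeral_eq_Suc)
next
  case (Suc m)
  have "(\<Sum>k\<le>Suc m+9. (tetra k)^2) = (\<Sum>k\<le>m+9. (tetra k)^2) + (tetra (m+10))^2"
  proof -
    have "Suc m + 9 = Suc (m+9)" "m + 10 = Suc (m+9)" by simp_all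
    then show ?thesis by (simp only: sum.atMost_Suc)
  qed
  then show ?case using Suc Q_step[of m] by simp
qed

lemma tt_int: "tt (int j) = real_of_int (TT j) / 2"
  by (simp add: tt_def TT_def)

theorem mainTheorem1:
  fixes n :: nat
  assumes "n \<ge> 1"
  shows "(\<Sum>k\<le>n. real_of_int ((tetra k)^2)) =
    1/3 + 1/3 * (2 * tt (int n) + tt (int n - 1) - tt (int n - 2) - tt (int n - 3)
      + 5 * tt (int n - 4) + 4 * tt (int n - 5) + tt (int n - 6) + tt (int n - 7)
      - tt (int n - 8) - tt (int n - 9))"
proof (cases "n \<ge> 9")
  case True
  then obtain m where n: "n = m + 9" using le_Suc_ex by (metis add.commute)
  have e: "int n - 1 = int (m + 8)" "int n - 2 = int (m + 7)" "int n - 3 = int (m + 6)" "int n - 4 = int (m + 5)" "int n - 5 = int (m + 4)" "int n - 6 = int (m + 3)" "int n - 7 = int (m + 2)" "int n - 8 = int (m + 1)" "int n - 9 = int (m + 0)" using n by simp_all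
  have s: "6 * (\<Sum>k\<le>n. real_of_int ((tetra k)^2)) = 2 + real_of_int (Q m)"
    using arg_cong[OF sum_Q[of m], of real_of_int] n by simp
  show ?thesis
    unfolding e unfolding n tt_int
    using s[unfolded n] unfolding Q_def by (simp add: algebra_simps)
next
  case False
  then have "n \<in> {1,2,3,4,5,6,7,8}" using assms by auto
  then show ?thesis
    by (auto simp: tt_def numeral_eq_Suc)
qed

end
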